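(* Let $G=(V,E)$ be a finite simple undirected graph whose vertex set is partitioned into color classes $V_1,\dots,V_r$, and suppose $(V_{\eta_1},\dots,V_{\eta_r})$, $\eta\in\mathfrak{S}_r$, is a color perfect elimination ordering. Then for every $i\in[r]$ the induced subgraph $G[V_i]$ is a disjoint union of cliques.
   Context: An ordered partition $(V_{\eta_1},\dots,V_{\eta_r})$ is a color perfect elimination ordering (cpeo) if for every $i\in[r]$ and every $v\in V_{\eta_i}$, $v$ is simplicial in $G[V_{\eta_i}\cup\dots\cup V_{\eta_r}]$, i.e. its neighbours in that induced subgraph form a clique. *)

theory Defs
  imports Main "HOL-Combinatorics.Permutations"
begin

definition simple_graph :: "'a set \<Rightarrow> ('a \<Rightarrow> 'a \<Rightarrow> bool) \<Rightarrow> bool" where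
  "simple_graph V E \<longleftrightarrow> finite V \<and> (\<forall>u v. E u v \<longrightarrow> u \<in> V \<and> v \<in> V)
     \<and> (\<forall>u v. E u v \<longrightarrow> E v u) \<and> (\<forall>v. \<not> E v v)"

definition is_clique :: "('a \<Rightarrow> 'a \<Rightarrow> bool) \<Rightarrow> 'a set \<Rightarrow> bool" where
  "is_clique E K \<longleftrightarrow> (\<forall>u\<in>K. \<forall>w\<in>K. u \<noteq> w \<longrightarrow> E u w)"

definition simplicial_in :: "('a \<Rightarrow> 'a \<Rightarrow> bool) \<Rightarrow> 'a set \<Rightarrow> 'a \<Rightarrow> bool" where
  "simplicial_in E S v \<longleftrightarrow> is_clique E {u \<in> S. E v u}"

definition color_partition :: "'a set \<Rightarrow> nat \<Rightarrow> (nat \<Rightarrow> 'a set) \<Rightarrow> bool" where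
  "color_partition V r Vc \<longleftrightarrow> (\<Union>i\<in>{1..r}. Vc i) = V
     \<and> (\<forall>i\<in>{1..r}. \<forall>j\<in>{1..r}. i \<noteq> j \<longrightarrow> Vc i \<inter> Vc j = {})"

definition cpeo :: "('a \<Rightarrow> 'a \<Rightarrow> bool) \<Rightarrow> nat \<Rightarrow> (nat \<Rightarrow> 'a set) \<Rightarrow> (nat \<Rightarrow> nat) \<Rightarrow> bool" where
  "cpeo E r Vc eta \<longleftrightarrow> (\<forall>i\<in>{1..r}. \<forall>v\<in>Vc (eta i).
      simplicial_in E (\<Union>j\<in>{i..r}. Vc (eta j)) v)"

definition disjoint_union_of_cliques :: "('a \<Rightarrow> 'a \<Rightarrow> bool) \<Rightarrow> 'a set \<Rightarrow> bool" where
  "disjoint_union_of_cliques E S \<longleftrightarrow> (\<exists>P. \<Union>P = S \<and> {} \<notin> P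
      \<and> (\<forall>A\<in>P. \<forall>B\<in>P. A \<noteq> B \<longrightarrow> A \<inter> B = {})
      \<and> (\<forall>A\<in>P. is_clique E A)
      \<and> (\<forall>A\<in>P. \<forall>B\<in>P. A \<noteq> B \<longrightarrow> (\<forall>u\<in>A. \<forall>w\<in>B. \<not> E u w)))"

end

theory Submission
  imports Defs
begin

theorem corollary3p3:
  fixes V :: "'a set" and E :: "'a \<Rightarrow> 'a \<Rightarrow> bool" and r :: nat
    and Vc :: "nat \<Rightarrow> 'a set" and eta :: "nat \<Rightarrow> nat"
  assumes "simple_graph V E"
    and "color_partition V r Vc"
    and "eta permutes {1..r}"
    and "cpeo E r Vc eta"
    and "i \<in> {1..r}"
  shows "disjoint_union_of_cliques E (Vc i)"
proof -
  have sym: "\<And>u v. E u v \<Longrightarrow> E v u" and irr: "\<And>v. \<not> E v v"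
    using assms(1) unfolding simple_graph_def by auto
  obtain k where k: "k \<in> {1..r}" "eta k = i"
  proof -
    have "eta ` {1..r} = {1..r}" using assms(3) by (rule permutes_image)
    then have "i \<in> eta ` {1..r}" using assms(5) by simp
    then show ?thesis using that by blast
  qed
  have sub: "Vc i \<subseteq> (\<Union>j\<in>{k..r}. Vc (eta j))"
    using k by auto
  have tr: "E u w" if "u \<in> Vc i" "v \<in> Vc i" "w \<in> Vc i" "E u v" "E v w" "u \<noteq> w" for u v w
  proof -
    have "simplicial_in E (\<Union>j\<in>{k..r}. Vc (eta j)) v"
      using assms(4) k that(2) unfolding cpeo_def by auto
    then have cl: "is_clique E {x \<in> (\<Union>j\<in>{k..r}. Vc (eta j)). E v x}"
      unfolding simplicial_in_def .
    have "u \<in> {x \<in> (\<Union>j\<in>{k..r}. Vc (eta j)). E v x}" using that(1,4) sub sym[OF that(4)] by auto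
    moreover have "w \<in> {x \<in> (\<Union>j\<in>{k..r}. Vc (eta j)). E v x}" using that sub by auto
    ultimately show ?thesis using cl that(6) unfolding is_clique_def by blast
  qed
  define C where "C u = {w \<in> Vc i. w = u \<or> E u w}" for u
  define P where "P = C ` Vc i"
  have Ceq: "C u = C w" if "u \<in> Vc i" "w \<in> C u" for u w
  proof -
    have wV: "w \<in> Vc i" and uw: "w = u \<or> E u w" using that(2) unfolding C_def by simp_all
    show ?thesis
    proof (cases "w = u")
      case True then show ?thesis by simp
    next
      case False
      then have euw: "E u w" using uw by simp
      have ewu: "E w u" using sym[OF euw] .
      show ?thesis
      proof (rule set_eqI)
        fix x
        have "x = u \<or> E u x \<longleftrightarrow> x = w \<or> E w x" if xV: "x \<in> Vc i"
        proof
          assume h: "x = u \<or> E u x"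
          show "x = w \<or> E w x"
          proof (cases "x = w")
            case False
            show ?thesis
            proof (cases "x = u")
              case True then show ?thesis using ewu by simp
            next
              case xu: False
              then have "E u x" using h by simp
              from tr[OF wV \<open>u \<in> Vc i\<close> xV ewu this False[symmetric]] show ?thesis by simp
            qed
          qed simp
        next
          assume h: "x = w \<or> E w x"
          show "x = u \<or> E u x"
          proof (cases "x = u")
            case False
            show ?thesis
            proof (cases "x = w")
              case True then show ?thesis using euw by simp
            next
              case xw: False
              then have "E w x" using h by simp
              from tr[OF \<open>u \<in> Vc i\<close> wV xV euw this False[symmetric]] show ?thesis by simp
            qed
          qed simp
        qed
        then show "x \<in> C u \<longleftrightarrow> x \<in> C w" unfolding C_def by (simp only: mem_Collect_eq) blast
      qed
    qed
  qed
  have h1: "\<Union>P = Vc i" unfolding P_def C_def by auto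
  have h2: "{} \<notin> P" unfolding P_def C_def by auto
  have h3: "\<forall>A\<in>P. \<forall>B\<in>P. A \<noteq> B \<longrightarrow> A \<inter> B = {}"
  proof (intro ballI impI)
    fix A B assume "A \<in> P" "B \<in> P" "A \<noteq> B"
    then obtain a b where ab: "a \<in> Vc i" "b \<in> Vc i" "A = C a" "B = C b" unfolding P_def by auto
    show "A \<inter> B = {}"
    proof (rule ccontr)
      assume "A \<inter> B \<noteq> {}"
      then obtain x where x1: "x \<in> C a" and x2: "x \<in> C b" using ab by auto
      have "C a = C x" "C b = C x" using Ceq[OF ab(1) x1] Ceq[OF ab(2) x2] by simp_all
      then show False using ab \<open>A \<noteq> B\<close> by simp
    qed
  qed
  have h5: "\<forall>A\<in>P. \<forall>B\<in>P. A \<noteq> B \<longrightarrow> (\<forall>u\<in>A. \<forall>w\<in>B. \<not> E u w)"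
  proof (intro ballI impI notI)
    fix A B u w assume "A \<in> P" "B \<in> P" "A \<noteq> B" and u: "u \<in> A" and w: "w \<in> B" and e: "E u w"
    then obtain a b where ab: "a \<in> Vc i" "b \<in> Vc i" "A = C a" "B = C b" unfolding P_def by auto
    have "C a = C u" using Ceq[OF ab(1)] ab(3) u by simp
    have "C b = C w" using Ceq[OF ab(2)] ab(4) w by simp
    have uV: "u \<in> Vc i" using u ab(3) unfolding C_def by simp
    have "w \<in> Vc i" using w ab(4) unfolding C_def by simp
    then have "w \<in> C u" using e unfolding C_def by simp
    then have "C u = C w" using Ceq[OF uV] by simp
    then show False using ab \<open>A \<noteq> B\<close> \<open>C a = C u\<close> \<open>C b = C w\<close> by simp
  qed
  have h4: "\<forall>A\<in>P. is_clique E A"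
  proof
    fix A assume "A \<in> P"
    then obtain a where a: "a \<in> Vc i" "A = C a" unfolding P_def by auto
    show "is_clique E A" unfolding is_clique_def
    proof (intro ballI impI)
      fix u w assume "u \<in> A" "w \<in> A" "u \<noteq> w"
      then have uw: "u \<in> Vc i" "w \<in> Vc i" "u = a \<or> E a u" "w = a \<or> E a w"
        using a unfolding C_def by auto
      show "E u w"
      proof (cases "u = a")
        case True then show ?thesis using uw \<open>u \<noteq> w\<close> by simp
      next
        case False
        then have eau: "E a u" using uw by simp
        show ?thesis
        proof (cases "w = a")
          case True then show ?thesis using sym[OF eau] by simp
        next
          case False
          then have "E a w" using uw by simp
          from tr[OF uw(1) a(1) uw(2) sym[OF eau] this \<open>u \<noteq> w\<close>] show ?thesis .
        qed
      qed
    qed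
  qed
  show ?thesis unfolding disjoint_union_of_cliques_def
    using h1 h2 h3 h4 h5 by blast
qed

end
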